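(* Let $\nu\in\mathbb C$. Then $J_\nu(\cdot;q^2)$ and $J_{\nu+1}(\cdot;q^2)$ have no common zero in $\mathbb C\setminus\{0\}$.
   Context: Fix $0<q<1$. For $a\in\mathbb C$ put $(a;q)_0=1$, $(a;q)_k=\prod_{i=0}^{k-1}(1-aq^i)$, $(a;q)_\infty=\prod_{i\ge0}(1-aq^i)$. For $\nu\in\mathbb C$ and $x\in\mathbb C\setminus\{0\}$ the Hahn–Exton $q$-Bessel function is $$J_\nu(x;q^2)=\frac{x^\nu}{(q^2;q^2)_\infty}\sum_{k=0}^\infty\frac{(-1)^kq^{k(k+1)}(q^{2\nu+2k+2};q^2)_\infty}{(q^2;q^2)_k}\,x^{2k},$$ with $x^\nu=\exp(\nu\operatorname{Log}x)$ (principal branch). *)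

theory Defs
  imports "HOL-Analysis.Analysis"
begin

definition qpoch :: "complex \<Rightarrow> complex \<Rightarrow> nat \<Rightarrow> complex" where
  "qpoch a q k = (\<Prod>i<k. 1 - a * q ^ i)"

definition qpoch_inf :: "complex \<Rightarrow> complex \<Rightarrow> complex" where
  "qpoch_inf a q = (\<Prod>i. 1 - a * q ^ i)"

text \<open>Hahn--Exton q-Bessel function J_nu(x;q^2), for real 0<q<1.
  Complex powr is exp (nu * ln x) with the principal logarithm; for the positive real
  base q, q powr s = exp (s * ln q).\<close>
definition hahn_exton_J :: "real \<Rightarrow> complex \<Rightarrow> complex \<Rightarrow> complex" where
  "hahn_exton_J q nu x =
     x powr nu / qpoch_inf (of_real (q^2)) (of_real (q^2)) *
     (\<Sum>k. (-1) ^ k * of_real (q ^ (k * (k + 1))) *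
            qpoch_inf (of_real q powr (2 * nu + 2 * of_nat k + 2)) (of_real (q^2)) /
            qpoch (of_real (q^2)) (of_real (q^2)) k * x ^ (2 * k))"

end

theory Submission
  imports Defs
begin

lemma cpowr_add: "(x::complex) powr (a + b) = x powr a * x powr b"
  by (simp add: powr_def distrib_right exp_add)

lemma qprod_conv:
  fixes r :: real assumes "0 \<le> r" "r < 1"
  shows "convergent_prod (\<lambda>i. 1 - w * of_real r ^ i :: complex)"
proof -
  have "summable (\<lambda>i. norm w * r ^ i)"
    using assms by (intro summable_mult summable_geometric) auto
  then have "summable (\<lambda>i. norm ((1 - w * of_real r ^ i) - 1))"
    using assms by (simp add: norm_mult norm_power abs_of_nonneg)
  then show ?thesis
    by (intro abs_convergent_prod_imp_convergent_prod summable_imp_abs_convergent_prod)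
qed

lemma qpoch_inf_shift:
  fixes r :: real assumes "0 \<le> r" "r < 1"
  shows "qpoch_inf w (of_real r) = (1 - w) * qpoch_inf (w * of_real r) (of_real r)"
proof -
  let ?f = "\<lambda>i. 1 - w * of_real r ^ i :: complex"
  have eq: "(\<lambda>n. ?f (Suc n)) = (\<lambda>i. 1 - (w * of_real r) * of_real r ^ i)"
    by (auto simp: mult.assoc)
  have "convergent_prod (\<lambda>i. 1 - (w * of_real r) * of_real r ^ i :: complex)"
    by (rule qprod_conv[OF assms])
  then have "(\<lambda>n. ?f (Suc n)) has_prod qpoch_inf (w * of_real r) (of_real r)"
    unfolding eq qpoch_inf_def by (rule convergent_prod_has_prod)
  then have "?f has_prod (qpoch_inf (w * of_real r) (of_real r) * ?f 0)"
    by (rule has_prod_Suc_imp)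
  then have "prodinf ?f = qpoch_inf (w * of_real r) (of_real r) * ?f 0"
    by (rule has_prod_unique[symmetric])
  then show ?thesis unfolding qpoch_inf_def by (simp add: mult.commute)
qed

lemma qpoch_inf_nonzero:
  fixes r :: real assumes "0 \<le> r" "r < 1" "norm w < 1"
  shows "qpoch_inf w (of_real r) \<noteq> 0"
  unfolding qpoch_inf_def
proof (rule prodinf_nonzero[OF qprod_conv[OF assms(1,2)]])
  fix i
  have "norm (w * of_real r ^ i) = norm w * r ^ i"
    using assms by (simp add: norm_mult norm_power abs_of_nonneg)
  also have "\<dots> \<le> norm w" using assms
    by (simp add: mult_left_le power_le_one)
  finally have "norm (w * of_real r ^ i) < 1" using assms by simp
  then show "1 - w * of_real r ^ i \<noteq> 0" by auto
qed

lemma qpoch_inf_bound: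
  fixes r :: real assumes "0 \<le> r" "r < 1"
  shows "norm (qpoch_inf w (of_real r)) \<le> exp (norm w / (1 - r))"
proof -
  let ?f = "\<lambda>i. 1 - w * of_real r ^ i :: complex"
  have lim: "(\<lambda>n. norm (\<Prod>i\<le>n. ?f i)) \<longlonglongrightarrow> norm (qpoch_inf w (of_real r))"
    unfolding qpoch_inf_def by (intro tendsto_norm convergent_prod_LIMSEQ qprod_conv assms)
  have sg: "summable (\<lambda>i. norm w * r ^ i)"
    using assms by (intro summable_mult summable_geometric) auto
  have "norm (\<Prod>i\<le>n. ?f i) \<le> exp (norm w / (1 - r))" for n
  proof -
    have "norm (\<Prod>i\<le>n. ?f i) = (\<Prod>i\<le>n. norm (?f i))" by (simp add: prod_norm)
    also have "\<dots> \<le> (\<Prod>i\<le>n. exp (norm w * r^i))"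
    proof (rule prod_mono)
      fix i
      have "norm (?f i) \<le> norm (1::complex) + norm (w * of_real r ^ i)"
        by (rule norm_triangle_ineq4)
      also have "\<dots> = 1 + norm w * r^i" using assms by (simp add: norm_mult norm_power abs_of_nonneg)
      also have "\<dots> \<le> exp (norm w * r^i)" by (rule exp_ge_add_one_self)
      finally show "0 \<le> norm (?f i) \<and> norm (?f i) \<le> exp (norm w * r^i)" by simp
    qed
    also have "\<dots> = exp (\<Sum>i\<le>n. norm w * r^i)" by (simp add: exp_sum)
    also have "\<dots> \<le> exp (\<Sum>i. norm w * r^i)"
      using assms by (intro exp_mono sum_le_suminf sg) auto
    also have "(\<Sum>i. norm w * r^i) = norm w / (1 - r)"
      using assms by (simp add: suminf_mult suminf_geometric)
    finally show ?thesis .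
  qed
  then show ?thesis by (intro LIMSEQ_le_const2[OF lim]) auto
qed


definition Pk :: "real \<Rightarrow> complex \<Rightarrow> nat \<Rightarrow> complex" where
  "Pk q nu k = qpoch_inf (of_real q powr (2 * nu + 2 * of_nat k + 2)) (of_real (q^2))"
definition dk :: "real \<Rightarrow> nat \<Rightarrow> complex" where
  "dk q k = qpoch (of_real (q^2)) (of_real (q^2)) k"
definition Tk :: "real \<Rightarrow> complex \<Rightarrow> nat \<Rightarrow> complex" where
  "Tk q nu k = (-1) ^ k * of_real (q ^ (k * (k + 1))) * Pk q nu k / dk q k"
definition G :: "real \<Rightarrow> complex \<Rightarrow> complex \<Rightarrow> complex" where
  "G q nu z = (\<Sum>k. Tk q nu k * z ^ k)"

lemma J_eq: "hahn_exton_J q nu x =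
   x powr nu / qpoch_inf (of_real (q^2)) (of_real (q^2)) * G q nu (x^2)"
  unfolding hahn_exton_J_def G_def Tk_def Pk_def dk_def by (simp add: power_mult)

lemma Pk_alt:
  assumes "0 < q"
  shows "Pk q nu k = qpoch_inf (of_real q powr (2*nu) * of_real (q^2) ^ Suc k) (of_real (q^2))"
proof -
  have e: "2 * nu + 2 * of_nat k + 2 = 2 * nu + of_nat (2 * Suc k)" by simp
  have "of_real q powr (of_nat (2 * Suc k)) = (of_real q :: complex) ^ (2 * Suc k)"
    using assms by (intro powr_nat') simp
  also have "\<dots> = of_real (q^2) ^ Suc k" by (simp add: power_mult power2_eq_square)
  finally show ?thesis unfolding Pk_def e cpowr_add by simp
qed

lemma Pk_succ: "Pk q (nu + 1) k = Pk q nu (Suc k)"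
proof -
  have "2 * (nu + 1) + 2 * of_nat k + 2 = 2 * nu + 2 * of_nat (Suc k) + (2::complex)" by simp
  then show ?thesis unfolding Pk_def by simp
qed

lemma Pk_rec:
  assumes "0 < q" "q < 1"
  shows "Pk q nu k = (1 - of_real q powr (2*nu) * of_real (q^2) ^ Suc k) * Pk q nu (Suc k)"
proof -
  have h: "0 \<le> q^2" "q^2 < 1" using assms by (auto simp: power_less_one_iff)
  let ?c = "of_real q powr (2*nu) :: complex" and ?Q = "of_real (q^2) :: complex"
  have s: "?c * ?Q ^ Suc k * ?Q = ?c * ?Q ^ Suc (Suc k)" by (simp only: power_Suc2 mult.assoc)
  show ?thesis unfolding Pk_alt[OF assms(1)] qpoch_inf_shift[OF h, of "?c * ?Q ^ Suc k"] s ..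
qed

lemma dk_Suc: "dk q (Suc k) = dk q k * (1 - of_real (q^2) ^ Suc k)"
  unfolding dk_def qpoch_def by simp

lemma dk_bound:
  assumes "0 < q" "q < 1"
  shows "(1 - q^2) ^ k \<le> norm (dk q k)"
proof -
  have "(1 - q^2) ^ k = (\<Prod>i<k. 1 - q^2)" by simp
  also have "\<dots> \<le> (\<Prod>i<k. norm (1 - of_real (q^2) * of_real (q^2) ^ i :: complex))"
  proof (rule prod_mono)
    fix i
    have "norm (1::complex) - norm (of_real (q^2) * of_real (q^2) ^ i :: complex)
          \<le> norm (1 - of_real (q^2) * of_real (q^2) ^ i :: complex)"
      by (rule norm_triangle_ineq2)
    moreover have "norm (of_real (q^2) * of_real (q^2) ^ i :: complex) = q^2 * (q^2)^i"
      by (simp add: norm_mult norm_power)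
    moreover have "q^2 * (q^2)^i \<le> q^2" using assms
      by (simp add: mult_left_le power_le_one)
    moreover have "q^2 < 1" using assms by (simp add: power_less_one_iff)
    ultimately show "0 \<le> 1 - q^2 \<and> 1 - q^2 \<le> norm (1 - of_real (q^2) * of_real (q^2) ^ i :: complex)"
      by simp
  qed
  also have "\<dots> = norm (dk q k)" unfolding dk_def qpoch_def by (simp add: prod_norm)
  finally show ?thesis .
qed

lemma dk_nonzero:
  assumes "0 < q" "q < 1"
  shows "dk q k \<noteq> 0"
proof -
  have "q^2 < 1" using assms by (simp add: power_less_one_iff)
  then have "0 < (1 - q^2) ^ k" by simp
  with dk_bound[OF assms, of k] show ?thesis by auto
qed

lemma Pk_bound:
  assumes "0 < q" "q < 1"
  shows "norm (Pk q nu k) \<le> exp (norm (of_real q powr (2*nu) :: complex) / (1 - q^2))"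
proof -
  let ?c = "of_real q powr (2*nu) :: complex"
  have h: "0 \<le> q^2" "q^2 < 1" using assms by (auto simp: power_less_one_iff)
  have "norm (?c * of_real (q^2) ^ Suc k) = norm ?c * (q^2) ^ Suc k"
    by (simp add: norm_mult norm_power)
  also have "\<dots> \<le> norm ?c" using h assms by (intro mult_left_le power_le_one) auto
  finally have n: "norm (?c * of_real (q^2) ^ Suc k) \<le> norm ?c" .
  have "norm (Pk q nu k) \<le> exp (norm (?c * of_real (q^2) ^ Suc k) / (1 - q^2))"
    unfolding Pk_alt[OF assms(1)] by (rule qpoch_inf_bound[OF h])
  also have "\<dots> \<le> exp (norm ?c / (1 - q^2))"
    using h n by (intro exp_mono divide_right_mono) auto
  finally show ?thesis .
qed


lemma Tk_summable:
  assumes "0 < q" "q < 1"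
  shows "summable (\<lambda>k. Tk q nu k * z ^ k)"
proof -
  define B where "B = exp (norm (of_real q powr (2*nu) :: complex) / (1 - q^2))"
  define R where "R = norm z / (1 - q^2)"
  have q2: "q^2 < 1" using assms by (simp add: power_less_one_iff)
  have B0: "0 \<le> B" unfolding B_def by simp
  have R0: "0 \<le> R" unfolding R_def using q2 by simp
  have bnd: "norm (Tk q nu k * z ^ k) \<le> B * (q^(k+1) * R)^k" for k
  proof -
    have "norm (Tk q nu k * z ^ k) = q^(k*(k+1)) * norm (Pk q nu k) * norm z ^ k / norm (dk q k)"
      unfolding Tk_def using assms by (simp add: norm_mult norm_power norm_divide)
    also have "\<dots> \<le> q^(k*(k+1)) * B * norm z ^ k / (1 - q^2)^k"
    proof (rule frac_le)
      show "0 \<le> q^(k*(k+1)) * B * norm z ^ k" using assms B0 by simp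
      show "q^(k*(k+1)) * norm (Pk q nu k) * norm z ^ k \<le> q^(k*(k+1)) * B * norm z ^ k"
        using Pk_bound[OF assms, of nu k] assms unfolding B_def
        by (intro mult_right_mono mult_left_mono) auto
      show "0 < (1 - q^2)^k" using q2 by simp
      show "(1 - q^2)^k \<le> norm (dk q k)" by (rule dk_bound[OF assms])
    qed
    also have "\<dots> = B * (q^(k+1) * R)^k"
    proof -
      have "q^(k*(k+1)) = (q^(k+1))^k" by (metis mult.commute power_mult)
      then show ?thesis unfolding R_def by (simp add: power_mult_distrib power_divide)
    qed
    finally show ?thesis .
  qed
  have l0: "(\<lambda>k. q^k) \<longlonglongrightarrow> 0" by (rule LIMSEQ_power_zero) (use assms in simp)
  have "(\<lambda>k. q^(Suc k)) \<longlonglongrightarrow> 0" using LIMSEQ_Suc[OF l0] .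
  then have "(\<lambda>k. q^(k+1) * R) \<longlonglongrightarrow> 0 * R" by (intro tendsto_mult_right) simp
  then have "eventually (\<lambda>k. q^(k+1) * R < 1/2) sequentially"
    by (intro order_tendstoD) auto
  then obtain N where N: "\<And>k. k \<ge> N \<Longrightarrow> q^(k+1) * R < 1/2"
    by (auto simp: eventually_sequentially)
  show ?thesis
  proof (rule summable_comparison_test')
    show "summable (\<lambda>k. B * (1/2::real)^k)"
      by (intro summable_mult summable_geometric) auto
    fix k assume "N \<le> k"
    have "(q^(k+1) * R)^k \<le> (1/2)^k"
      using N[OF \<open>N \<le> k\<close>] assms R0 by (intro power_mono) auto
    then show "norm (Tk q nu k * z ^ k) \<le> B * (1/2)^k"
      using bnd[of k] B0 by (meson mult_left_mono order_trans)
  qed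
qed

lemma R1:
  assumes "0 < q" "q < 1"
  shows "G q nu z = G q (nu+1) z - of_real q powr (2*nu) * of_real (q^2) * G q (nu+1) (of_real (q^2) * z)"
proof -
  let ?c = "of_real q powr (2*nu) :: complex" and ?Q = "of_real (q^2) :: complex"
  have t: "Tk q nu k * z ^ k = Tk q (nu+1) k * z^k - ?c * ?Q * (Tk q (nu+1) k * (?Q * z)^k)" for k
    using dk_nonzero[OF assms, of k] unfolding Tk_def Pk_succ Pk_rec[OF assms, of nu k]
    by (simp add: power_mult_distrib field_simps)
  have "G q nu z = (\<Sum>k. Tk q (nu+1) k * z^k - ?c * ?Q * (Tk q (nu+1) k * (?Q * z)^k))"
    unfolding G_def t ..
  also have "\<dots> = G q (nu+1) z - (\<Sum>k. ?c * ?Q * (Tk q (nu+1) k * (?Q * z)^k))"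
    unfolding G_def
    by (intro suminf_diff[symmetric] summable_mult Tk_summable assms)
  also have "(\<Sum>k. ?c * ?Q * (Tk q (nu+1) k * (?Q * z)^k)) = ?c * ?Q * G q (nu+1) (?Q * z)"
    unfolding G_def by (intro suminf_mult Tk_summable assms)
  finally show ?thesis .
qed

lemma R2:
  assumes "0 < q" "q < 1"
  shows "G q nu z - G q nu (of_real (q^2) * z) = - (of_real (q^2) * z) * G q (nu+1) (of_real (q^2) * z)"
proof -
  let ?Q = "of_real (q^2) :: complex"
  define h where "h k = Tk q nu k * z ^ k - Tk q nu k * (?Q * z) ^ k" for k
  have sh: "summable h" unfolding h_def by (intro summable_diff Tk_summable assms)
  have h0: "h 0 = 0" unfolding h_def by simp
  have hS: "h (Suc j) = - (?Q * z) * (Tk q (nu+1) j * (?Q * z) ^ j)" for j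
  proof -
    have ex: "Suc j * (Suc j + 1) = j * (j + 1) + 2 * Suc j" by simp
    have qq: "of_real (q ^ (Suc j * (Suc j + 1))) = of_real (q ^ (j * (j + 1))) * ?Q ^ Suc j"
      unfolding ex power_add power_mult by simp
    have nz: "1 - ?Q ^ Suc j \<noteq> 0"
    proof
      assume "1 - ?Q ^ Suc j = 0"
      then have "norm (?Q ^ Suc j) = 1" by (metis eq_iff_diff_eq_0 norm_one)
      moreover have "norm (?Q ^ Suc j) = (q^2) ^ Suc j" by (simp only: norm_power norm_of_real) simp
      moreover have "(q^2) ^ Suc j < 1" using assms
        by (intro power_Suc_less_one) (auto simp: power_less_one_iff)
      ultimately show False by simp
    qed
    have dz: "dk q j \<noteq> 0" by (rule dk_nonzero[OF assms])
    have "h (Suc j) = Tk q nu (Suc j) * z ^ Suc j * (1 - ?Q ^ Suc j)"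
      unfolding h_def by (simp add: power_mult_distrib algebra_simps)
    also have "\<dots> = - (?Q * z) * (Tk q (nu+1) j * (?Q * z) ^ j)"
      unfolding Tk_def Pk_succ dk_Suc qq using nz dz
      by (simp add: power_mult_distrib field_simps)
    finally show ?thesis .
  qed
  have "G q nu z - G q nu (?Q * z) = suminf h"
    unfolding G_def h_def by (intro suminf_diff Tk_summable assms)
  also have "\<dots> = (\<Sum>j. h (Suc j))" using suminf_split_head[OF sh] h0 by simp
  also have "\<dots> = - (?Q * z) * G q (nu+1) (?Q * z)"
    unfolding hS G_def by (intro suminf_mult Tk_summable assms)
  finally show ?thesis .
qed


lemma powser_accum_zero:
  fixes a :: "nat \<Rightarrow> complex" and zs :: "nat \<Rightarrow> complex"
  assumes summ: "\<And>z. summable (\<lambda>k. a k * z ^ k)"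
    and ex: "\<exists>m. a m \<noteq> 0"
    and lim: "zs \<longlonglongrightarrow> 0" and nz: "\<And>n. zs n \<noteq> 0"
    and zero: "\<And>n. (\<Sum>k. a k * zs n ^ k) = 0"
  shows False
proof -
  define m where "m = (LEAST m. a m \<noteq> 0)"
  have am: "a m \<noteq> 0" unfolding m_def using LeastI_ex[OF ex] .
  have below: "a k = 0" if "k < m" for k
  proof -
    have "\<not> (a k \<noteq> 0)" using that unfolding m_def by (rule not_less_Least)
    then show ?thesis by simp
  qed
  define h where "h z = (\<Sum>k. a (k + m) * z ^ k)" for z
  have sh: "summable (\<lambda>k. a (k + m) * z ^ k)" if "z \<noteq> 0" for z
  proof -
    have "summable (\<lambda>k. a (k + m) * z ^ (k + m))"
      using summable_ignore_initial_segment[OF summ[of z], of m] .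
    then have S1: "summable (\<lambda>k. (1 / z ^ m) * (a (k + m) * z ^ (k + m)))"
      by (rule summable_mult)
    have S2: "(\<lambda>k. (1 / z ^ m) * (a (k + m) * z ^ (k + m))) = (\<lambda>k. a (k + m) * z ^ k)"
      using that by (auto simp: power_add field_simps)
    show ?thesis using S1 unfolding S2 .
  qed
  have fact: "(\<Sum>k. a k * z ^ k) = z ^ m * h z" if "z \<noteq> 0" for z
  proof -
    have "(\<lambda>k. a (k + m) * z ^ k) sums h z" unfolding h_def using sh[OF that] by (rule summable_sums)
    then have S3: "(\<lambda>k. z ^ m * (a (k + m) * z ^ k)) sums (z ^ m * h z)" by (rule sums_mult)
    have S4: "(\<lambda>k. z ^ m * (a (k + m) * z ^ k)) = (\<lambda>k. a (k + m) * z ^ (k + m))"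
      by (auto simp: power_add field_simps)
    have "(\<lambda>k. a (k + m) * z ^ (k + m)) sums (z ^ m * h z)" using S3 unfolding S4 .
    then have "(\<lambda>i. a i * z ^ i) sums (z ^ m * h z + (\<Sum>i<m. a i * z ^ i))"
      using sums_iff_shift[of "\<lambda>i. a i * z ^ i" m "z ^ m * h z"] by simp
    moreover have "(\<Sum>i<m. a i * z ^ i) = 0" using below by simp
    ultimately have "(\<lambda>i. a i * z ^ i) sums (z ^ m * h z)" by simp
    then show ?thesis by (rule sums_unique[symmetric])
  qed
  have hz: "h (zs n) = 0" for n using fact[OF nz[of n]] zero[of n] nz[of n] by simp
  have "isCont h 0" unfolding h_def
    by (rule isCont_powser[where K = 1]) (use sh[of 1] in auto)
  then have "(\<lambda>n. h (zs n)) \<longlonglongrightarrow> h 0" using lim by (rule isCont_tendsto_compose)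
  then have "(\<lambda>n. 0::complex) \<longlonglongrightarrow> h 0" using hz by simp
  then have "h 0 = 0" by (simp add: LIMSEQ_const_iff)
  moreover have "h 0 = a m" unfolding h_def using powser_zero[of "\<lambda>k. a (k + m)"] by simp
  ultimately show False using am by simp
qed

theorem proposition3p8:
  fixes q :: real and nu :: complex
  assumes "0 < q" and "q < 1"
  shows "\<not> (\<exists>x::complex. x \<noteq> 0 \<and> hahn_exton_J q nu x = 0 \<and> hahn_exton_J q (nu + 1) x = 0)"
proof
  assume "\<exists>x::complex. x \<noteq> 0 \<and> hahn_exton_J q nu x = 0 \<and> hahn_exton_J q (nu + 1) x = 0"
  then obtain x :: complex where x: "x \<noteq> 0" "hahn_exton_J q nu x = 0" "hahn_exton_J q (nu + 1) x = 0"
    by blast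
  let ?Q = "of_real (q^2) :: complex" and ?c = "of_real q powr (2*nu) :: complex"
  have q2: "0 \<le> q^2" "q^2 < 1" using assms by (auto simp: power_less_one_iff)
  have nQ: "norm ?Q < 1" by (simp only: norm_of_real) (use q2 in simp)
  have D: "qpoch_inf ?Q ?Q \<noteq> 0"
    using q2 nQ by (intro qpoch_inf_nonzero) auto
  have G0: "G q nu (x^2) = 0" "G q (nu+1) (x^2) = 0"
    using x D unfolding J_eq by simp_all
  have Qnz: "?Q \<noteq> 0" using assms by simp
  have cnz: "?c \<noteq> 0" using assms by simp
  have all: "G q nu (?Q ^ n * x^2) = 0 \<and> G q (nu+1) (?Q ^ n * x^2) = 0" for n
  proof (induction n)
    case 0 then show ?case using G0 by simp
  next
    case (Suc n)
    let ?z = "?Q ^ n * x^2"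
    have e: "?Q ^ Suc n * x^2 = ?Q * ?z" by (simp add: mult.assoc)
    have r1: "G q nu ?z = G q (nu+1) ?z - ?c * ?Q * G q (nu+1) (?Q * ?z)"
      by (rule R1[OF assms])
    from Suc.IH have i1: "G q nu ?z = 0" and i2: "G q (nu+1) ?z = 0" by auto
    have "0 = 0 - ?c * ?Q * G q (nu+1) (?Q * ?z)"
      using r1 unfolding i1 i2 .
    then have "?c * ?Q * G q (nu+1) (?Q * ?z) = 0" by (simp only: diff_0 neg_0_equal_iff_equal)
    then have g1: "G q (nu+1) (?Q * ?z) = 0" using Qnz cnz by simp
    have r2: "G q nu ?z - G q nu (?Q * ?z) = - (?Q * ?z) * G q (nu+1) (?Q * ?z)"
      by (rule R2[OF assms])
    then have g2: "G q nu (?Q * ?z) = 0" unfolding i1 g1 by simp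
    show ?case unfolding e using g1 g2 by blast
  qed
  have "\<exists>m. Tk q nu m \<noteq> 0"
  proof -
    have l0: "(\<lambda>k. (q^2)^k) \<longlonglongrightarrow> 0" by (rule LIMSEQ_power_zero) (use q2 in simp)
    have "(\<lambda>k. norm ?c * (q^2)^k) \<longlonglongrightarrow> norm ?c * 0" by (intro tendsto_mult_left l0)
    then have "eventually (\<lambda>k. norm ?c * (q^2)^k < 1) sequentially"
      using order_tendstoD(2) by force
    then obtain N where N: "\<And>k. k \<ge> N \<Longrightarrow> norm ?c * (q^2)^k < 1"
      by (auto simp: eventually_sequentially)
    have "norm (?c * ?Q ^ Suc N) = norm ?c * (q^2) ^ Suc N"
      by (simp only: norm_mult norm_power norm_of_real) simp
    then have "norm (?c * ?Q ^ Suc N) < 1" using N[of "Suc N"] by simp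
    then have "Pk q nu N \<noteq> 0"
      unfolding Pk_alt[OF assms(1)] using q2 by (intro qpoch_inf_nonzero) auto
    then have "Tk q nu N \<noteq> 0"
      unfolding Tk_def using dk_nonzero[OF assms, of N] assms by simp
    then show ?thesis by blast
  qed
  moreover have "(\<lambda>n. ?Q ^ n * x^2) \<longlonglongrightarrow> 0"
  proof -
    have "(\<lambda>n. ?Q ^ n) \<longlonglongrightarrow> 0" by (rule LIMSEQ_power_zero) (rule nQ)
    then show ?thesis by (rule tendsto_mult_left_zero)
  qed
  moreover have "\<And>n. ?Q ^ n * x^2 \<noteq> 0" using x(1) Qnz by simp
  moreover have "\<And>n. (\<Sum>k. Tk q nu k * (?Q ^ n * x^2) ^ k) = 0"
    using all unfolding G_def by blast
  ultimately show False
    by (rule powser_accum_zero[of "Tk q nu" "\<lambda>n. ?Q ^ n * x^2", OF Tk_summable[OF assms]])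
qed

end
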